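(* Let $N\ge2$ and, for $0\le k\le N-1$, let $H_N(k)=\sum_{i=k+1}^{N-1}\frac1i$ (so $H_N(N-1)=0$). For $\theta>0$ define $$\kappa_N(\theta)=\begin{cases}0 & \text{if } 0<\theta\le H_N(0)^{-1},\\ k & \text{if } H_N(k-1)^{-1}<\theta\le H_N(k)^{-1}\text{ for some }1\le k\le N-2,\\ N-1&\text{if }\theta>N-1.\end{cases}$$ Then for every $\theta>0$: - $W(N,\kappa_N(\theta))\ge W(N,k)$ for all $0\le k\le N-1$; - in the weighted game of best choice with the Ewens distribution (probability of $\pi\in\mathfrak S_N$ proportional to $\theta^{\mathrm{lrm}(\pi)}$), the positional strategy that rejects the first $\kappa_N(\theta)$ candidates and then accepts the next left-to-right maximum maximizes the probability of winning among all strategies. Moreover, $\kappa_N$ is a nondecreasing function of $\theta$.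
   Context: Permutations of $\{1,\dots,N\}$ are written in one-line notation; $\mathfrak S_N$ is the set of all of them. An entry $\pi_j$ is a left-to-right maximum if $\pi_j>\pi_i$ for all $i<j$; $\mathrm{lrm}(\pi)$ is the number of left-to-right maxima. The weighted game of best choice: $\pi\in\mathfrak S_N$ is drawn with probability proportional to $\theta^{\mathrm{lrm}(\pi)}$. At step $i$ the player sees only the relative order of $\pi_1,\dots,\pi_i$ and decides to accept candidate $i$ (ending the game) or reject it irrevocably; candidate $N$ is accepted if all others were rejected. The player wins iff the accepted candidate $i$ has $\pi_i=N$. For $0\le k\le N-1$, $\pi$ is $k$-winnable if the first index $j>k$ with $\pi_j$ a left-to-right maximum has $\pi_j=N$. $W(N,k)=\sum_{k\text{-winnable }\pi}\theta^{\mathrm{lrm}(\pi)}$, so $W(N,k)/\sum_{\pi\in\mathfrak S_N}\theta^{\mathrm{lrm}(\pi)}$ is the winning probability of the positional strategy that rejects the first $k$ candidates and accepts the next left-to-right maximum. *)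

theory Defs
  imports Complex_Main "HOL-Combinatorics.Multiset_Permutations"
begin

text \<open>Permutations of {1..N} in one-line notation, as lists; list position j (0-based)
  holds the entry pi_(j+1).\<close>
definition perms :: "nat \<Rightarrow> nat list set" where
  "perms N = permutations_of_set {1..N}"

definition is_lrm :: "nat list \<Rightarrow> nat \<Rightarrow> bool" where
  "is_lrm xs j \<longleftrightarrow> j < length xs \<and> (\<forall>i<j. xs ! i < xs ! j)"

definition lrm :: "nat list \<Rightarrow> nat" where
  "lrm xs = card {j. j < length xs \<and> is_lrm xs j}"

text \<open>k-winnable: the first index j > k (1-based) carrying a left-to-right maximum
  has pi_j = N.  In 0-based positions: first position j \<ge> k.\<close>
definition k_winnable :: "nat \<Rightarrow> nat \<Rightarrow> nat list \<Rightarrow> bool" where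
  "k_winnable N k xs \<longleftrightarrow>
     (\<exists>j. k \<le> j \<and> j < N \<and> is_lrm xs j \<and> xs ! j = N \<and>
          (\<forall>i. k \<le> i \<and> i < j \<longrightarrow> \<not> is_lrm xs i))"

definition W :: "real \<Rightarrow> nat \<Rightarrow> nat \<Rightarrow> real" where
  "W \<theta> N k = (\<Sum>xs\<in>{xs \<in> perms N. k_winnable N k xs}. \<theta> ^ lrm xs)"

definition rel_pattern :: "nat list \<Rightarrow> nat list" where
  "rel_pattern ys = map (\<lambda>y. card {z \<in> set ys. z \<le> y}) ys"

text \<open>A (deterministic) strategy decides, from the relative order of the first i
  candidates (a list of length i), whether to accept candidate i.\<close>
type_synonym strategy = "nat list \<Rightarrow> bool"

text \<open>Index (1-based) of the accepted candidate; candidate N is accepted if all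
  earlier ones were rejected.\<close>
definition stop_index :: "nat \<Rightarrow> strategy \<Rightarrow> nat list \<Rightarrow> nat" where
  "stop_index N s xs = (LEAST i. 1 \<le> i \<and> (i = N \<or> s (rel_pattern (take i xs))))"

definition wins :: "nat \<Rightarrow> strategy \<Rightarrow> nat list \<Rightarrow> bool" where
  "wins N s xs \<longleftrightarrow> xs ! (stop_index N s xs - 1) = N"

definition win_prob :: "real \<Rightarrow> nat \<Rightarrow> strategy \<Rightarrow> real" where
  "win_prob \<theta> N s =
     (\<Sum>xs\<in>{xs \<in> perms N. wins N s xs}. \<theta> ^ lrm xs) / (\<Sum>xs\<in>perms N. \<theta> ^ lrm xs)"

text \<open>Positional strategy: reject the first k candidates, then accept the next
  left-to-right maximum (the current candidate has the largest relative rank).\<close>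
definition pos_strategy :: "nat \<Rightarrow> strategy" where
  "pos_strategy k p \<longleftrightarrow> k < length p \<and> last p = length p"

definition H :: "nat \<Rightarrow> nat \<Rightarrow> real" where
  "H N k = (\<Sum>i\<in>{k+1..N-1}. 1 / real i)"

definition kappa :: "nat \<Rightarrow> real \<Rightarrow> nat" where
  "kappa N \<theta> =
     (if \<theta> \<le> 1 / H N 0 then 0
      else if \<theta> > real N - 1 then N - 1
      else (THE k. 1 \<le> k \<and> k \<le> N - 2 \<and> 1 / H N (k - 1) < \<theta> \<and> \<theta> \<le> 1 / H N k))"

end

theory Submission
  imports Defs
begin


context
  fixes N :: nat and th :: real
begin

definition Comp :: "nat \<Rightarrow> nat list set" where
  "Comp i = {c. length c = N - i \<and> (\<forall>j<N-i. c!j \<le> i+j)}"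

definition wt :: "nat \<Rightarrow> nat list \<Rightarrow> real" where
  "wt i c = (\<Prod>j<length c. if c!j = i+j then th else 1)"

definition stop_from :: "(nat list \<Rightarrow> bool) \<Rightarrow> nat \<Rightarrow> nat list \<Rightarrow> nat" where
  "stop_from t i rs = (LEAST j. i \<le> j \<and> (j = N - 1 \<or> t (take (Suc j) rs)))"

definition win :: "nat list \<Rightarrow> nat \<Rightarrow> bool" where
  "win rs j \<longleftrightarrow> rs!j = j \<and> (\<forall>l. j < l \<and> l < N \<longrightarrow> rs!l \<noteq> l)"

definition F :: "(nat list \<Rightarrow> bool) \<Rightarrow> nat list \<Rightarrow> real" where
  "F t h = (\<Sum>c\<in>Comp (length h). wt (length h) c *
       (if win (h@c) (stop_from t (length h) (h@c)) then 1 else 0))"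

definition Anl :: "nat \<Rightarrow> real" where
  "Anl m = (\<Sum>c\<in>Comp m. wt m c * (if \<forall>j<length c. c!j \<noteq> m+j then 1 else 0))"

lemma finite_Comp: "finite (Comp i)"
proof -
  have "Comp i \<subseteq> {c. set c \<subseteq> {..N} \<and> length c = N - i}"
  proof
    fix c assume c: "c \<in> Comp i"
    have "set c \<subseteq> {..N}"
    proof
      fix x assume "x \<in> set c"
      then obtain j where j: "j < length c" "x = c!j" by (auto simp: in_set_conv_nth)
      with c show "x \<in> {..N}" unfolding Comp_def by force
    qed
    with c show "c \<in> {c. set c \<subseteq> {..N} \<and> length c = N - i}" by (simp add: Comp_def)
  qed
  moreover have "finite {c. set c \<subseteq> {..N} \<and> length c = N - i}"
    by (rule finite_lists_length_eq) simp
  ultimately show ?thesis by (rule finite_subset)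
qed

lemma Comp_ge: "N \<le> i \<Longrightarrow> Comp i = {[]}"
  by (auto simp: Comp_def)

lemma Comp_Suc: "i < N \<Longrightarrow> Comp i = (\<lambda>(r,c). r#c) ` ({..i} \<times> Comp (Suc i))"
proof (intro equalityI subsetI)
  fix x assume i: "i < N" and x: "x \<in> Comp i"
  then obtain r c where rc: "x = r#c" unfolding Comp_def by (cases x) auto
  have "r \<le> i" using x i rc unfolding Comp_def by (auto elim!: allE[of _ 0])
  moreover have "c \<in> Comp (Suc i)"
  proof -
    have "length c = N - Suc i" using x rc unfolding Comp_def by auto
    moreover have "\<forall>j<N - Suc i. c!j \<le> Suc i + j"
    proof (intro allI impI)
      fix j assume j: "j < N - Suc i"
      have all: "\<forall>j<N-i. x!j \<le> i+j" using x unfolding Comp_def by simp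
      have "Suc j < N - i" using j by simp
      with all rc have "(r#c)!(Suc j) \<le> i + Suc j" by blast
      then show "c!j \<le> Suc i + j" by simp
    qed
    ultimately show ?thesis unfolding Comp_def by simp
  qed
  ultimately show "x \<in> (\<lambda>(r,c). r#c) ` ({..i} \<times> Comp (Suc i))" using rc by auto
next
  fix x assume i: "i < N" and x: "x \<in> (\<lambda>(r,c). r#c) ` ({..i} \<times> Comp (Suc i))"
  then obtain r c where rc: "x = r#c" "r \<le> i" "c \<in> Comp (Suc i)" by auto
  have "length x = N - i" using rc i unfolding Comp_def by auto
  moreover have "\<forall>j<N-i. x!j \<le> i+j"
  proof (intro allI impI)
    fix j assume j: "j < N - i"
    show "x!j \<le> i+j"
    proof (cases j)
      case 0 then show ?thesis using rc by simp
    next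
      case (Suc j')
      then have "j' < N - Suc i" using j by simp
      then have "c!j' \<le> Suc i + j'" using rc unfolding Comp_def by auto
      then show ?thesis using rc Suc by simp
    qed
  qed
  ultimately show "x \<in> Comp i" unfolding Comp_def by simp
qed

lemma sum_Comp:
  assumes "i < N"
  shows "(\<Sum>c\<in>Comp i. g c) = (\<Sum>r\<le>i. \<Sum>c\<in>Comp (Suc i). g (r#c))"
proof -
  have inj: "inj_on (\<lambda>(r,c). r#c) ({..i} \<times> Comp (Suc i))"
    by (auto simp: inj_on_def)
  have "(\<Sum>c\<in>Comp i. g c) = (\<Sum>x\<in>{..i} \<times> Comp (Suc i). g ((\<lambda>(r,c). r#c) x))"
    using sum.reindex[OF inj, of g] Comp_Suc[OF assms] by simp
  also have "\<dots> = (\<Sum>r\<le>i. \<Sum>c\<in>Comp (Suc i). g (r#c))"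
    by (simp add: sum.cartesian_product finite_Comp split_def)
  finally show ?thesis .
qed

lemma wt_Cons: "wt i (r#c) = (if r = i then th else 1) * wt (Suc i) c"
  unfolding wt_def length_Cons prod.lessThan_Suc_shift by simp

lemma wt_nonneg: "th \<ge> 0 \<Longrightarrow> wt i c \<ge> 0"
  unfolding wt_def by (intro prod_nonneg) auto

lemma sum_w: "(\<Sum>r\<le>i. (if r = i then th else 1) * (x::real)) = (th + real i) * x"
proof -
  have "(\<Sum>r\<le>i. (if r = i then th else 1) * x) = (\<Sum>r<i. x) + th * x"
    by (simp add: lessThan_Suc_atMost[symmetric])
  then show ?thesis by (simp add: algebra_simps)
qed

lemma sum_w0: "(\<Sum>r\<le>i. (if r = i then (0::real) else x)) = real i * x"
  by (simp add: lessThan_Suc_atMost[symmetric])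

lemma Anl_N: "Anl N = 1"
  unfolding Anl_def by (simp add: Comp_ge wt_def)

lemma Anl_Suc: "m < N \<Longrightarrow> Anl m = real m * Anl (Suc m)"
proof -
  assume m: "m < N"
  have "Anl m = (\<Sum>r\<le>m. \<Sum>c\<in>Comp (Suc m). wt m (r#c) *
      (if \<forall>j<length (r#c). (r#c)!j \<noteq> m+j then 1 else 0))"
    unfolding Anl_def by (rule sum_Comp[OF m])
  also have "\<dots> = (\<Sum>r\<le>m. (if r = m then 0 else Anl (Suc m)))"
  proof (rule sum.cong[OF refl])
    fix r assume "r \<in> {..m}"
    have eq: "(\<forall>j<length (r#c). (r#c)!j \<noteq> m+j) \<longleftrightarrow> r \<noteq> m \<and> (\<forall>j<length c. c!j \<noteq> Suc m + j)"
      for c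
      by (auto simp: less_Suc_eq_0_disj)
    show "(\<Sum>c\<in>Comp (Suc m). wt m (r#c) *
      (if \<forall>j<length (r#c). (r#c)!j \<noteq> m+j then 1 else 0)) = (if r = m then 0 else Anl (Suc m))"
      unfolding eq wt_Cons Anl_def by (auto simp: sum_distrib_left)
  qed
  also have "\<dots> = real m * Anl (Suc m)" by (rule sum_w0)
  finally show ?thesis .
qed

lemma Anl_nonneg: "th \<ge> 0 \<Longrightarrow> Anl m \<ge> 0"
  unfolding Anl_def by (intro sum_nonneg) (auto intro: wt_nonneg)

lemma Least_shift_skip:
  assumes "\<not> P i"
  shows "(LEAST j. i \<le> j \<and> P j) = (LEAST j. Suc i \<le> j \<and> P j)"
proof -
  have "(\<lambda>j. i \<le> j \<and> P j) = (\<lambda>j. Suc i \<le> j \<and> P j)"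
    using assms by (auto simp: le_eq_less_or_eq)
  then show ?thesis by simp
qed

lemma stop_from_Cons:
  assumes "length h = i" "i < N"
  shows "stop_from t i (h@r#c) =
    (if i = N - 1 \<or> t (h@[r]) then i else stop_from t (Suc i) (h@r#c))"
proof -
  have tk: "take (Suc i) (h@r#c) = h@[r]" using assms by simp
  show ?thesis
  proof (cases "i = N - 1 \<or> t (h@[r])")
    case True
    then show ?thesis unfolding stop_from_def
      by (intro trans[OF Least_equality]) (auto simp add: tk simp del: take_append)
  next
    case False
    then show ?thesis unfolding stop_from_def
      by (subst Least_shift_skip) (auto simp add: tk simp del: take_append)
  qed
qed

lemma win_Cons:
  assumes "length h = i" "length c = N - Suc i"
  shows "win (h@r#c) i \<longleftrightarrow> r = i \<and> (\<forall>j<length c. c!j \<noteq> Suc i + j)"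
proof
  assume w: "win (h@r#c) i"
  then have "r = i" using assms by (simp add: win_def nth_append)
  moreover have "\<forall>j<length c. c!j \<noteq> Suc i + j"
  proof (intro allI impI)
    fix j assume j: "j < length c"
    have "(h@r#c)!(Suc i + j) \<noteq> Suc i + j"
      using w j assms unfolding win_def by auto
    then show "c!j \<noteq> Suc i + j" using assms by (simp add: nth_append)
  qed
  ultimately show "r = i \<and> (\<forall>j<length c. c!j \<noteq> Suc i + j)" by simp
next
  assume a: "r = i \<and> (\<forall>j<length c. c!j \<noteq> Suc i + j)"
  show "win (h@r#c) i" unfolding win_def
  proof (intro conjI allI impI)
    show "(h@r#c)!i = i" using a assms by (simp add: nth_append)
  next
    fix l assume l: "i < l \<and> l < N"
    then obtain j where j: "l = Suc i + j" by (metis less_iff_Suc_add add_Suc)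
    then have "j < length c" using l assms by simp
    then show "(h@r#c)!l \<noteq> l" using a assms j by (simp add: nth_append)
  qed
qed

lemma F_rec:
  assumes "length h = i" "i < N"
  shows "F t h = (\<Sum>r\<le>i. (if r = i then th else 1) *
     (if i = N - 1 \<or> t (h@[r]) then (if r = i then Anl (Suc i) else 0) else F t (h@[r])))"
proof -
  have "F t h = (\<Sum>r\<le>i. \<Sum>c\<in>Comp (Suc i). wt i (r#c) *
       (if win (h@r#c) (stop_from t i (h@r#c)) then 1 else 0))"
    unfolding F_def assms(1) by (rule sum_Comp[OF assms(2)])
  also have "\<dots> = (\<Sum>r\<le>i. (if r = i then th else 1) *
     (if i = N - 1 \<or> t (h@[r]) then (if r = i then Anl (Suc i) else 0) else F t (h@[r])))"
  proof (rule sum.cong[OF refl])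
    fix r assume "r \<in> {..i}"
    show "(\<Sum>c\<in>Comp (Suc i). wt i (r#c) *
       (if win (h@r#c) (stop_from t i (h@r#c)) then 1 else 0)) =
      (if r = i then th else 1) *
     (if i = N - 1 \<or> t (h@[r]) then (if r = i then Anl (Suc i) else 0) else F t (h@[r]))"
    proof (cases "i = N - 1 \<or> t (h@[r])")
      case True
      have "(\<Sum>c\<in>Comp (Suc i). wt i (r#c) *
         (if win (h@r#c) (stop_from t i (h@r#c)) then 1 else 0)) =
         (\<Sum>c\<in>Comp (Suc i). (if r = i then th else 1) * (wt (Suc i) c *
         (if r = i \<and> (\<forall>j<length c. c!j \<noteq> Suc i + j) then 1 else 0)))"
      proof (rule sum.cong[OF refl])
        fix c assume c: "c \<in> Comp (Suc i)"
        then have lc: "length c = N - Suc i" by (simp add: Comp_def)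
        show "wt i (r#c) * (if win (h@r#c) (stop_from t i (h@r#c)) then 1 else 0) =
          (if r = i then th else 1) * (wt (Suc i) c *
         (if r = i \<and> (\<forall>j<length c. c!j \<noteq> Suc i + j) then 1 else 0))"
          using stop_from_Cons[OF assms, of t r c] True win_Cons[OF assms(1) lc, of r]
          by (simp add: wt_Cons)
      qed
      also have "\<dots> = (if r = i then th else 1) * (if r = i then Anl (Suc i) else 0)"
        by (auto simp: sum_distrib_left[symmetric] Anl_def)
      finally show ?thesis using True by simp
    next
      case False
      have "(\<Sum>c\<in>Comp (Suc i). wt i (r#c) *
         (if win (h@r#c) (stop_from t i (h@r#c)) then 1 else 0)) =
         (\<Sum>c\<in>Comp (Suc i). (if r = i then th else 1) * (wt (Suc i) c *
         (if win ((h@[r])@c) (stop_from t (Suc i) ((h@[r])@c)) then 1 else 0)))"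
        using stop_from_Cons[OF assms, of t r] False
        by (intro sum.cong[OF refl]) (simp add: wt_Cons)
      also have "\<dots> = (if r = i then th else 1) * F t (h@[r])"
        unfolding F_def length_append_singleton assms(1) by (simp only: sum_distrib_left)
      finally show ?thesis using False by simp
    qed
  qed
  finally show ?thesis .
qed

function B :: "nat \<Rightarrow> real" where
  "B i = (if i < N then th * max (Anl (Suc i)) (B (Suc i)) + real i * B (Suc i) else 0)"
  by auto
termination by (relation "measure (\<lambda>i. N - i)") auto

function V :: "nat \<Rightarrow> real" where
  "V i = (if i < N then th * Anl (Suc i) + real i * V (Suc i) else 0)"
  by auto
termination by (relation "measure (\<lambda>i. N - i)") auto

function D :: "nat \<Rightarrow> nat \<Rightarrow> real" where
  "D k i = (if k \<le> i then V i else (th + real i) * D k (Suc i))"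
  by auto
termination by (relation "measure (\<lambda>(k,i). k - i)") auto

declare B.simps[simp del] V.simps[simp del] D.simps[simp del]

lemma B_nonneg: "th > 0 \<Longrightarrow> B i \<ge> 0"
proof (induction i rule: B.induct)
  case (1 i)
  show ?case
  proof (cases "i < N")
    case True
    then have "B (Suc i) \<ge> 0" using 1 by simp
    moreover have "Anl (Suc i) \<ge> 0" using Anl_nonneg 1 by simp
    ultimately show ?thesis using True 1 by (subst B.simps) (simp add: max_def)
  next
    case False then show ?thesis by (subst B.simps) simp
  qed
qed

lemma F_le_B:
  assumes "th > 0"
  shows "length h = i \<Longrightarrow> i < N \<Longrightarrow> F t h \<le> B i"
proof (induction i arbitrary: h rule: B.induct)
  case (1 i)
  have Bi: "B i = th * max (Anl (Suc i)) (B (Suc i)) + real i * B (Suc i)"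
    using 1 by (subst B.simps) simp
  have BS: "B (Suc i) \<ge> 0" using B_nonneg assms by simp
  have "F t h = (\<Sum>r\<le>i. (if r = i then th else 1) *
     (if i = N - 1 \<or> t (h@[r]) then (if r = i then Anl (Suc i) else 0) else F t (h@[r])))"
    by (rule F_rec[OF "1.prems"])
  also have "\<dots> \<le> (\<Sum>r\<le>i. (if r = i then th * max (Anl (Suc i)) (B (Suc i)) else B (Suc i)))"
  proof (rule sum_mono)
    fix r assume r: "r \<in> {..i}"
    have IH: "\<not> (i = N - 1 \<or> t (h@[r])) \<Longrightarrow> F t (h@[r]) \<le> B (Suc i)"
    proof -
      assume nc: "\<not> (i = N - 1 \<or> t (h@[r]))"
      then have "Suc i < N" using "1.prems" by auto
      then show ?thesis using "1.IH"[of "h@[r]"] "1.prems" by simp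
    qed
    show "(if r = i then th else 1) *
     (if i = N - 1 \<or> t (h@[r]) then (if r = i then Anl (Suc i) else 0) else F t (h@[r]))
      \<le> (if r = i then th * max (Anl (Suc i)) (B (Suc i)) else B (Suc i))"
      using IH BS assms by (auto intro: mult_left_mono order.trans[OF _ max.cobounded2])
  qed
  also have "\<dots> = th * max (Anl (Suc i)) (B (Suc i)) + real i * B (Suc i)"
    by (simp add: lessThan_Suc_atMost[symmetric])
  finally show ?case using Bi by simp
qed

definition posr :: "nat \<Rightarrow> nat list \<Rightarrow> bool" where
  "posr k h \<longleftrightarrow> k < length h \<and> last h = length h - 1"

lemma V_N: "V N = 0" by (subst V.simps) simp

lemma D_ge: "k \<le> i \<Longrightarrow> D k i = V i" by (subst D.simps) simp
lemma D_lt: "i < k \<Longrightarrow> D k i = (th + real i) * D k (Suc i)" by (subst D.simps) simp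
lemma V_lt: "i < N \<Longrightarrow> V i = th * Anl (Suc i) + real i * V (Suc i)" by (subst V.simps) simp
lemma B_lt: "i < N \<Longrightarrow> B i = th * max (Anl (Suc i)) (B (Suc i)) + real i * B (Suc i)"
  by (subst B.simps) simp
lemma B_N: "B N = 0" by (subst B.simps) simp

lemma F_posr:
  assumes "k < N"
  shows "length h = i \<Longrightarrow> i < N \<Longrightarrow> F (posr k) h = D k i"
proof (induction i arbitrary: h rule: B.induct)
  case (1 i)
  have rec: "F (posr k) h = (\<Sum>r\<le>i. (if r = i then th else 1) *
     (if i = N - 1 \<or> posr k (h@[r]) then (if r = i then Anl (Suc i) else 0) else F (posr k) (h@[r])))"
    by (rule F_rec[OF "1.prems"])
  show ?case
  proof (cases "k \<le> i")
    case True
    have VS: "V (Suc i) = D k (Suc i)" using True by (simp add: D_ge)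
    have "F (posr k) h = (\<Sum>r\<le>i. (if r = i then th * Anl (Suc i) else V (Suc i)))"
      unfolding rec
    proof (rule sum.cong[OF refl])
      fix r assume r: "r \<in> {..i}"
      have pr: "posr k (h@[r]) \<longleftrightarrow> r = i" using True "1.prems"(1) by (simp add: posr_def)
      show "(if r = i then th else 1) *
     (if i = N - 1 \<or> posr k (h@[r]) then (if r = i then Anl (Suc i) else 0) else F (posr k) (h@[r]))
        = (if r = i then th * Anl (Suc i) else V (Suc i))"
      proof (cases "r = i")
        case True then show ?thesis using pr by simp
      next
        case False
        show ?thesis
        proof (cases "i = N - 1")
          case True
          then have "Suc i = N" using "1.prems"(2) by simp
          then show ?thesis using False pr V_N \<open>i = N - 1\<close> by simp
        next
          case ne: False
          then have "Suc i < N" using "1.prems"(2) by simp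
          then have "F (posr k) (h@[r]) = D k (Suc i)" using "1.IH"[of "h@[r]"] "1.prems" by simp
          then show ?thesis using False pr ne VS by simp
        qed
      qed
    qed
    also have "\<dots> = th * Anl (Suc i) + real i * V (Suc i)"
      by (simp add: lessThan_Suc_atMost[symmetric])
    also have "\<dots> = D k i" using True "1.prems"(2) by (simp add: D_ge V_lt)
    finally show ?thesis .
  next
    case False
    then have ne: "i \<noteq> N - 1" "Suc i < N" using assms by auto
    have "F (posr k) h = (\<Sum>r\<le>i. (if r = i then th else 1) * D k (Suc i))"
      unfolding rec
    proof (rule sum.cong[OF refl])
      fix r assume r: "r \<in> {..i}"
      have pr: "\<not> posr k (h@[r])" using False "1.prems"(1) by (simp add: posr_def)
      have "F (posr k) (h@[r]) = D k (Suc i)" using "1.IH"[of "h@[r]"] "1.prems" ne by simp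
      then show "(if r = i then th else 1) *
     (if i = N - 1 \<or> posr k (h@[r]) then (if r = i then Anl (Suc i) else 0) else F (posr k) (h@[r]))
        = (if r = i then th else 1) * D k (Suc i)" using pr ne by simp
    qed
    also have "\<dots> = (th + real i) * D k (Suc i)" by (rule sum_w)
    also have "\<dots> = D k i" using False by (simp add: D_lt)
    finally show ?thesis .
  qed
qed

lemma H_last: "N \<ge> 1 \<Longrightarrow> H N (N - 1) = 0"
  unfolding H_def by simp

lemma H_step: "Suc i < N \<Longrightarrow> H N i = 1 / real (Suc i) + H N (Suc i)"
proof -
  assume a: "Suc i < N"
  have "{i+1..N-1} = insert (Suc i) {Suc i + 1..N-1}" using a by auto
  then show ?thesis unfolding H_def by simp
qed

lemma P_step: "Suc i < N \<Longrightarrow> Anl (Suc i) = real (Suc i) * Anl (Suc (Suc i))"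
  by (rule Anl_Suc)

lemma V_closed: "i < N \<Longrightarrow> V (Suc i) = th * Anl (Suc i) * H N i"
proof (induction i rule: B.induct)
  case (1 i)
  show ?case
  proof (cases "Suc i < N")
    case False
    then have "Suc i = N" using 1 by simp
    then show ?thesis using V_N H_last[of] by (metis diff_Suc_1 le_add1 mult_zero_right plus_1_eq_Suc)
  next
    case True
    have IH: "V (Suc (Suc i)) = th * Anl (Suc (Suc i)) * H N (Suc i)" using 1 True by simp
    have "V (Suc i) = th * Anl (Suc (Suc i)) + real (Suc i) * V (Suc (Suc i))"
      using True by (simp add: V_lt)
    also have "\<dots> = th * (real (Suc i) * Anl (Suc (Suc i))) * (1 / real (Suc i) + H N (Suc i))"
      using IH by (simp add: algebra_simps del: of_nat_Suc)
    also have "\<dots> = th * Anl (Suc i) * H N i"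
      using H_step[OF True] P_step[OF True] by simp
    finally show ?thesis .
  qed
qed

lemma V_le_B: "th > 0 \<Longrightarrow> V i \<le> B i"
proof (induction i rule: B.induct)
  case (1 i)
  show ?case
  proof (cases "i < N")
    case True
    then have "V (Suc i) \<le> B (Suc i)" using 1 by simp
    then have "real i * V (Suc i) \<le> real i * B (Suc i)" by (simp add: mult_left_mono)
    moreover have "th * Anl (Suc i) \<le> th * max (Anl (Suc i)) (B (Suc i))"
      using 1 by (simp add: mult_left_mono)
    ultimately show ?thesis using True by (simp add: V_lt B_lt)
  next
    case False then show ?thesis by (subst V.simps, subst B.simps) simp
  qed
qed

lemma B_eq_D:
  assumes th: "th > 0" and k: "k < N"
    and hi: "\<And>i. k \<le> i \<Longrightarrow> Suc i < N \<Longrightarrow> th * H N i \<le> 1"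
    and lo: "\<And>i. i < k \<Longrightarrow> th * H N i > 1"
  shows "i \<le> N \<Longrightarrow> B i = D k i"
proof (induction i rule: B.induct)
  case (1 i)
  show ?case
  proof (cases "i < N")
    case False
    then have "i = N" using 1 by simp
    then show ?thesis using k B_N V_N by (simp add: D_ge)
  next
    case True
    have IH: "B (Suc i) = D k (Suc i)" using 1 True by simp
    have P0: "Anl (Suc i) \<ge> 0" using Anl_nonneg th by simp
    show ?thesis
    proof (cases "k \<le> i")
      case ki: True
      have BS: "B (Suc i) = V (Suc i)" using IH ki by (simp add: D_ge)
      have "V (Suc i) \<le> Anl (Suc i)"
      proof (cases "Suc i < N")
        case True
        have "V (Suc i) = (th * H N i) * Anl (Suc i)" using V_closed \<open>i < N\<close> by simp
        also have "\<dots> \<le> 1 * Anl (Suc i)" using hi[OF ki True] P0 by (intro mult_right_mono)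
        finally show ?thesis by simp
      next
        case False
        then have "Suc i = N" using \<open>i < N\<close> by simp
        then show ?thesis using V_N P0 by simp
      qed
      then have "B i = th * Anl (Suc i) + real i * V (Suc i)"
        using True BS by (simp add: B_lt max_def)
      also have "\<dots> = D k i" using ki True by (simp add: D_ge V_lt)
      finally show ?thesis .
    next
      case ki: False
      have "Anl (Suc i) \<le> V (Suc i)"
      proof -
        have "1 * Anl (Suc i) \<le> (th * H N i) * Anl (Suc i)"
          using lo[of i] ki P0 by (intro mult_right_mono) auto
        also have "\<dots> = V (Suc i)" using V_closed \<open>i < N\<close> by simp
        finally show ?thesis by simp
      qed
      also have "\<dots> \<le> B (Suc i)" using V_le_B th by simp
      finally have "Anl (Suc i) \<le> B (Suc i)" .
      then have "B i = (th + real i) * B (Suc i)" using True by (simp add: B_lt max_def algebra_simps)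
      also have "\<dots> = D k i" using IH ki by (simp add: D_lt)
      finally show ?thesis .
    qed
  qed
qed

end


lemma H_pos: "i + 2 \<le> N \<Longrightarrow> H N i > 0"
  unfolding H_def
proof -
  assume a: "i + 2 \<le> N"
  have "(\<Sum>j\<in>{i+1..N-1}. 1 / real j) \<ge> (\<Sum>j\<in>{i+1}. 1 / real j)"
    using a by (intro sum_mono2) auto
  moreover have "(\<Sum>j\<in>{i+1}. 1 / real j) > 0" by simp
  ultimately show "(\<Sum>j\<in>{i+1..N-1}. 1 / real j) > 0" by linarith
qed

lemma H_anti: "i \<le> j \<Longrightarrow> H N j \<le> H N i"
  unfolding H_def by (intro sum_mono2) auto

lemma H_N2: "N \<ge> 2 \<Longrightarrow> H N (N - 2) = 1 / (real N - 1)"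
proof -
  assume "N \<ge> 2"
  then have "{N - 2 + 1..N - 1} = {N - 1}" by auto
  then show ?thesis unfolding H_def using \<open>N \<ge> 2\<close> by (simp add: of_nat_diff)
qed

lemma invH_mono: "i \<le> j \<Longrightarrow> j + 2 \<le> N \<Longrightarrow> 1 / H N i \<le> 1 / H N j"
  using H_pos[of j N] H_anti[of i j N] by (intro divide_left_mono) auto

lemma char_of_Q:
  assumes "1 \<le> k" "k \<le> N - 2" "1 / H N (k - 1) < th" "th \<le> 1 / H N k" "N \<ge> 2"
  shows "\<forall>i. i \<le> N - 2 \<longrightarrow> (i < k \<longleftrightarrow> 1 / H N i < th)"
proof (intro allI impI)
  fix i assume i: "i \<le> N - 2"
  show "i < k \<longleftrightarrow> 1 / H N i < th"
  proof
    assume "i < k"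
    then have "1 / H N i \<le> 1 / H N (k - 1)" using assms by (intro invH_mono) auto
    then show "1 / H N i < th" using assms by linarith
  next
    assume a: "1 / H N i < th"
    show "i < k"
    proof (rule ccontr)
      assume "\<not> i < k"
      then have "1 / H N k \<le> 1 / H N i" using assms i by (intro invH_mono) auto
      then show False using a assms by linarith
    qed
  qed
qed

lemma kappa_char:
  assumes N: "N \<ge> 2" and th: "th > 0"
  shows "kappa N th \<le> N - 1 \<and> (\<forall>i. i \<le> N - 2 \<longrightarrow> (i < kappa N th \<longleftrightarrow> 1 / H N i < th))"
proof (cases "th \<le> 1 / H N 0")
  case True
  then have "kappa N th = 0" by (simp add: kappa_def)
  moreover have "\<forall>i. i \<le> N - 2 \<longrightarrow> \<not> (1 / H N i < th)"
  proof (intro allI impI)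
    fix i assume "i \<le> N - 2"
    then have "1 / H N 0 \<le> 1 / H N i" using N by (intro invH_mono) auto
    then show "\<not> (1 / H N i < th)" using True by linarith
  qed
  ultimately show ?thesis by simp
next
  case F1: False
  show ?thesis
  proof (cases "th > real N - 1")
    case True
    then have "kappa N th = N - 1" using F1 by (simp add: kappa_def)
    moreover have "\<forall>i. i \<le> N - 2 \<longrightarrow> 1 / H N i < th"
    proof (intro allI impI)
      fix i assume "i \<le> N - 2"
      then have "1 / H N i \<le> 1 / H N (N - 2)" using N by (intro invH_mono) auto
      also have "\<dots> = real N - 1" using H_N2[OF N] by simp
      finally show "1 / H N i < th" using True by linarith
    qed
    ultimately show ?thesis using N by auto
  next
    case F2: False
    define Q where "Q k \<longleftrightarrow> 1 \<le> k \<and> k \<le> N - 2 \<and> 1 / H N (k - 1) < th \<and> th \<le> 1 / H N k" for k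
    have kap: "kappa N th = (THE k. Q k)" using F1 F2 by (simp add: kappa_def Q_def)
    define c where "c = (LEAST i. th \<le> 1 / H N i)"
    have wit: "th \<le> 1 / H N (N - 2)" using F2 H_N2[OF N] by simp
    have c1: "th \<le> 1 / H N c" unfolding c_def by (rule LeastI[of "\<lambda>i. th \<le> 1 / H N i", OF wit])
    have c2: "c \<le> N - 2" unfolding c_def by (rule Least_le[of "\<lambda>i. th \<le> 1 / H N i", OF wit])
    have c0: "c \<noteq> 0" using c1 F1 by (metis)
    have c3: "1 / H N (c - 1) < th"
    proof -
      have "\<not> th \<le> 1 / H N (c - 1)" unfolding c_def
        by (rule not_less_Least) (use c0 c_def in auto)
      then show ?thesis by simp
    qed
    have Qc: "Q c" unfolding Q_def using c0 c1 c2 c3 by auto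
    have uniq: "k = c" if "Q k" for k
    proof -
      have ck: "\<forall>i. i \<le> N - 2 \<longrightarrow> (i < k \<longleftrightarrow> 1 / H N i < th)"
        using that N unfolding Q_def by (intro char_of_Q) auto
      have cc: "\<forall>i. i \<le> N - 2 \<longrightarrow> (i < c \<longleftrightarrow> 1 / H N i < th)"
        using Qc N unfolding Q_def by (intro char_of_Q) auto
      have "k \<le> N - 2" using that unfolding Q_def by simp
      show "k = c"
      proof (rule ccontr)
        assume "k \<noteq> c"
        then show False
          using ck cc c2 \<open>k \<le> N - 2\<close> by (metis linorder_neq_iff order.strict_iff_not)
      qed
    qed
    have "kappa N th = c" unfolding kap using Qc uniq by (rule the_equality)
    moreover have "\<forall>i. i \<le> N - 2 \<longrightarrow> (i < c \<longleftrightarrow> 1 / H N i < th)"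
      using Qc N unfolding Q_def by (intro char_of_Q) auto
    ultimately show ?thesis using c2 N by auto
  qed
qed

lemma kappa_mono:
  assumes N: "N \<ge> 2" and "0 < t1" "t1 \<le> t2"
  shows "kappa N t1 \<le> kappa N t2"
proof (rule ccontr)
  assume "\<not> ?thesis"
  then have lt: "kappa N t2 < kappa N t1" by simp
  have c1: "kappa N t1 \<le> N - 1 \<and> (\<forall>i. i \<le> N - 2 \<longrightarrow> (i < kappa N t1 \<longleftrightarrow> 1 / H N i < t1))"
    using kappa_char[OF N] assms by simp
  have c2: "kappa N t2 \<le> N - 1 \<and> (\<forall>i. i \<le> N - 2 \<longrightarrow> (i < kappa N t2 \<longleftrightarrow> 1 / H N i < t2))"
    using kappa_char[OF N] assms by simp
  have "kappa N t2 \<le> N - 2" using lt c1 N by linarith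
  then have "1 / H N (kappa N t2) < t1" using c1 lt by simp
  then have "1 / H N (kappa N t2) < t2" using assms by simp
  then show False using c2 \<open>kappa N t2 \<le> N - 2\<close> by blast
qed



definition rk :: "nat list \<Rightarrow> nat \<Rightarrow> nat" where
  "rk xs j = card {l. l < j \<and> xs!l < xs!j}"

definition phi :: "nat list \<Rightarrow> nat list" where
  "phi xs = map (rk xs) [0..<length xs]"

lemma perms_facts:
  assumes "p \<in> perms N"
  shows "set p = {1..N}" "distinct p" "length p = N"
proof -
  show s: "set p = {1..N}" "distinct p" using assms permutations_of_setD unfolding perms_def by auto
  then show "length p = N" using distinct_card[of p] by simp
qed

lemma perm_nth: "p \<in> perms N \<Longrightarrow> j < N \<Longrightarrow> p!j \<in> {1..N}"
  using perms_facts[of p N] nth_mem[of j p] by auto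

lemma rk_le: "rk xs j \<le> j"
proof -
  have "{l. l < j \<and> xs!l < xs!j} \<subseteq> {..<j}" by auto
  then show ?thesis unfolding rk_def using card_mono[of "{..<j}"] by fastforce
qed

lemma is_lrm_rk: "j < length xs \<Longrightarrow> is_lrm xs j \<longleftrightarrow> rk xs j = j"
proof -
  assume j: "j < length xs"
  have sub: "{l. l < j \<and> xs!l < xs!j} \<subseteq> {..<j}" by auto
  have "rk xs j = j \<longleftrightarrow> {l. l < j \<and> xs!l < xs!j} = {..<j}"
  proof
    assume "rk xs j = j"
    then show "{l. l < j \<and> xs!l < xs!j} = {..<j}"
      using card_subset_eq[OF _ sub] unfolding rk_def by simp
  next
    assume "{l. l < j \<and> xs!l < xs!j} = {..<j}"
    then show "rk xs j = j" unfolding rk_def by simp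
  qed
  also have "\<dots> \<longleftrightarrow> (\<forall>i<j. xs!i < xs!j)" by auto
  finally show ?thesis using j unfolding is_lrm_def by simp
qed

lemma phi_nth: "j < length xs \<Longrightarrow> phi xs ! j = rk xs j"
  unfolding phi_def by simp

lemma phi_Comp: "length xs = N \<Longrightarrow> phi xs \<in> Comp N 0"
  unfolding Comp_def phi_def using rk_le by auto

lemma lrm_wt: "(th::real) ^ lrm xs = wt th 0 (phi xs)"
proof -
  have "wt th 0 (phi xs) = (\<Prod>j<length xs. if rk xs j = j then th else 1)"
    unfolding wt_def by (simp add: phi_def)
  also have "\<dots> = th ^ card ({..<length xs} \<inter> {j. rk xs j = j})"
    by (simp add: prod.If_cases)
  also have "{..<length xs} \<inter> {j. rk xs j = j} = {j. j < length xs \<and> is_lrm xs j}"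
    using is_lrm_rk by auto
  finally show ?thesis unfolding lrm_def by simp
qed

lemma rk_cmp:
  assumes "distinct xs" "distinct ys"
  shows "i \<le> length xs \<Longrightarrow> i \<le> length ys \<Longrightarrow> \<forall>j<i. rk xs j = rk ys j \<Longrightarrow>
     \<forall>a<i. \<forall>b<i. xs!a < xs!b \<longleftrightarrow> ys!a < ys!b"
proof (induction i)
  case 0 then show ?case by simp
next
  case (Suc i)
  have IH: "\<forall>a<i. \<forall>b<i. xs!a < xs!b \<longleftrightarrow> ys!a < ys!b" using Suc by simp
  define Lx where "Lx = {l. l < i \<and> xs!l < xs!i}"
  define Ly where "Ly = {l. l < i \<and> ys!l < ys!i}"
  have cardeq: "card Lx = card Ly" using Suc.prems(3) unfolding Lx_def Ly_def rk_def by simp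
  have fx: "finite Lx" "finite Ly" unfolding Lx_def Ly_def by auto
  have dx: "\<And>a. a < i \<Longrightarrow> xs!a \<noteq> xs!i" using assms(1) Suc.prems nth_eq_iff_index_eq by fastforce
  have dy: "\<And>a. a < i \<Longrightarrow> ys!a \<noteq> ys!i" using assms(2) Suc.prems nth_eq_iff_index_eq by fastforce
  have key: False if "a \<in> Lx" "a \<notin> Ly" "b \<in> Ly" "b \<notin> Lx" for a b
  proof -
    have ab: "a < i" "b < i" using that unfolding Lx_def Ly_def by auto
    have "xs!i < xs!b" using that(4) dx[OF ab(2)] ab unfolding Lx_def by auto
    then have "xs!a < xs!b" using that(1) unfolding Lx_def by auto
    then have "ys!a < ys!b" using IH ab by blast
    then have "ys!a < ys!i" using that(3) unfolding Ly_def by auto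
    then show False using that(2) ab unfolding Ly_def by auto
  qed
  have LL: "Lx = Ly"
  proof (cases "Lx \<subseteq> Ly")
    case True then show ?thesis using card_subset_eq[OF fx(2) True cardeq] by simp
  next
    case False
    then obtain a where a: "a \<in> Lx" "a \<notin> Ly" by auto
    show ?thesis
    proof (cases "Ly \<subseteq> Lx")
      case True then show ?thesis using card_subset_eq[OF fx(1) True cardeq[symmetric]] by simp
    next
      case False
      then obtain b where "b \<in> Ly" "b \<notin> Lx" by auto
      then show ?thesis using key a by blast
    qed
  qed
  have new1: "xs!a < xs!i \<longleftrightarrow> ys!a < ys!i" if "a < i" for a
    using LL that unfolding Lx_def Ly_def by blast
  have new2: "xs!i < xs!a \<longleftrightarrow> ys!i < ys!a" if "a < i" for a
    using new1[OF that] dx[OF that] dy[OF that] by auto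
  show ?case
  proof (intro allI impI)
    fix a b assume a: "a < Suc i" and b: "b < Suc i"
    show "xs!a < xs!b \<longleftrightarrow> ys!a < ys!b"
    proof (cases "a = i")
      case True
      then show ?thesis using new2[of b] b by (cases "b = i") auto
    next
      case False
      then have "a < i" using a by simp
      then show ?thesis using new1[of a] IH b by (cases "b = i") auto
    qed
  qed
qed

lemma card_take_le:
  assumes "distinct xs" "i \<le> length xs"
  shows "card {z \<in> set (take i xs). z \<le> y} = card {l. l < i \<and> xs!l \<le> y}"
proof -
  have "{z \<in> set (take i xs). z \<le> y} = (\<lambda>l. xs!l) ` {l. l < i \<and> xs!l \<le> y}"
    using assms by (force simp: set_conv_nth nth_take)
  moreover have "inj_on (\<lambda>l. xs!l) {l. l < i \<and> xs!l \<le> y}"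
    using assms by (auto simp: inj_on_def nth_eq_iff_index_eq)
  ultimately show ?thesis by (simp add: card_image)
qed

lemma rel_pattern_nth:
  assumes "distinct xs" "i \<le> length xs" "j < i"
  shows "rel_pattern (take i xs) ! j = card {l. l < i \<and> xs!l \<le> xs!j}"
  using assms card_take_le[OF assms(1,2)] by (simp add: rel_pattern_def)

lemma rel_pattern_eq:
  assumes "p \<in> perms N" "q \<in> perms N" "i \<le> N" "\<forall>j<i. rk p j = rk q j"
  shows "rel_pattern (take i p) = rel_pattern (take i q)"
proof (rule nth_equalityI)
  have lp: "length p = N" "length q = N" "distinct p" "distinct q"
    using perms_facts assms by auto
  then show "length (rel_pattern (take i p)) = length (rel_pattern (take i q))"
    by (simp add: rel_pattern_def)
  have cmp: "\<forall>a<i. \<forall>b<i. p!a < p!b \<longleftrightarrow> q!a < q!b"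
    using rk_cmp[OF lp(3,4)] assms lp by simp
  fix j assume "j < length (rel_pattern (take i p))"
  then have j: "j < i" using lp assms by (simp add: rel_pattern_def)
  have "{l. l < i \<and> p!l \<le> p!j} = {l. l < i \<and> q!l \<le> q!j}"
    using cmp j by (auto simp: not_less[symmetric])
  then show "rel_pattern (take i p) ! j = rel_pattern (take i q) ! j"
    using rel_pattern_nth[of p i j] rel_pattern_nth[of q i j] lp assms j by simp
qed

lemma rel_pattern_perm: "p \<in> perms N \<Longrightarrow> rel_pattern p = p"
proof -
  assume p: "p \<in> perms N"
  have "map (\<lambda>y. card {z \<in> set p. z \<le> y}) p = p"
  proof (rule map_idI)
    fix y assume "y \<in> set p"
    then have y: "y \<in> {1..N}" using perms_facts[OF p] by simp
    have "{z \<in> set p. z \<le> y} = {1..y}" using perms_facts[OF p] y by auto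
    then show "card {z \<in> set p. z \<le> y} = y" by simp
  qed
  then show ?thesis by (simp add: rel_pattern_def)
qed

lemma phi_inj: "inj_on phi (perms N)"
proof (rule inj_onI)
  fix p q assume p: "p \<in> perms N" and q: "q \<in> perms N" and e: "phi p = phi q"
  have lp: "length p = N" "length q = N" using perms_facts p q by auto
  have "\<forall>j<N. rk p j = rk q j"
    using e lp phi_nth by metis
  then have "rel_pattern (take N p) = rel_pattern (take N q)"
    using rel_pattern_eq[OF p q] by simp
  then show "p = q" using lp rel_pattern_perm[OF p] rel_pattern_perm[OF q] by simp
qed

lemma card_Comp: "i \<le> N \<Longrightarrow> card (Comp N i) * fact i = fact N"
proof (induction rule: inc_induct)
  case base then show ?case by (simp add: Comp_ge)
next
  case (step n)
  have "card (Comp N n) = card ({..n} \<times> Comp N (Suc n))"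
    unfolding Comp_Suc[OF step(2)]
    by (rule card_image) (auto simp: inj_on_def)
  also have "\<dots> = Suc n * card (Comp N (Suc n))" by (simp add: card_cartesian_product)
  finally show ?case using step(3) by (simp add: algebra_simps)
qed

lemma phi_bij: "bij_betw phi (perms N) (Comp N 0)"
proof -
  have sub: "phi ` perms N \<subseteq> Comp N 0" using phi_Comp perms_facts by blast
  have "card (phi ` perms N) = card (perms N)" by (rule card_image[OF phi_inj])
  also have "\<dots> = fact N" unfolding perms_def by simp
  also have "\<dots> = card (Comp N 0)" using card_Comp[of 0 N] by simp
  finally have "phi ` perms N = Comp N 0"
    by (intro card_subset_eq[OF finite_Comp sub])
  then show ?thesis using phi_inj by (simp add: bij_betw_def)
qed

lemma win_iff:
  assumes p: "p \<in> perms N" and j: "j < N"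
  shows "win N (phi p) j \<longleftrightarrow> p!j = N"
proof -
  have lp: "length p = N" "distinct p" "set p = {1..N}" using perms_facts p by auto
  have lrm: "\<And>l. l < N \<Longrightarrow> phi p ! l = l \<longleftrightarrow> is_lrm p l"
    using lp phi_nth is_lrm_rk by metis
  have w: "win N (phi p) j \<longleftrightarrow> is_lrm p j \<and> (\<forall>l. j < l \<and> l < N \<longrightarrow> \<not> is_lrm p l)"
    unfolding win_def using lrm j by auto
  have le: "\<And>l. l < N \<Longrightarrow> p!l \<le> N" using perm_nth[OF p] by auto
  have ne: "\<And>a b. a < N \<Longrightarrow> b < N \<Longrightarrow> a \<noteq> b \<Longrightarrow> p!a \<noteq> p!b"
    using lp nth_eq_iff_index_eq by metis
  have "N \<in> set p" using lp j by auto
  then obtain m where m: "m < N" "p!m = N" using lp(1) by (metis in_set_conv_nth)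
  have mlrm: "is_lrm p m"
    unfolding is_lrm_def
  proof (intro conjI allI impI)
    show "m < length p" using m lp by simp
  next
    fix i assume i: "i < m"
    have "p!i \<le> N" "p!i \<noteq> p!m" using le[of i] ne[of i m] i m by auto
    then show "p!i < p!m" using m by simp
  qed
  have nolrm: "\<not> is_lrm p l" if "m < l" "l < N" for l
  proof
    assume "is_lrm p l"
    then have "p!m < p!l" using that unfolding is_lrm_def by blast
    then show False using le[OF that(2)] m by simp
  qed
  show ?thesis
  proof
    assume "win N (phi p) j"
    then have a: "is_lrm p j" "\<forall>l. j < l \<and> l < N \<longrightarrow> \<not> is_lrm p l" using w by auto
    have "\<not> j < m" using a(2) m mlrm by blast
    moreover have "\<not> m < j"
    proof
      assume "m < j"
      then have "p!m < p!j" using a(1) unfolding is_lrm_def by blast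
      then show False using le[OF j] m by simp
    qed
    ultimately show "p!j = N" using m by (metis linorder_neqE_nat)
  next
    assume pj: "p!j = N"
    have "m = j"
    proof (rule ccontr)
      assume "m \<noteq> j"
      then have "p!m \<noteq> p!j" using ne m j by blast
      then show False using pj m by simp
    qed
    then show "win N (phi p) j" using w mlrm nolrm by simp
  qed
qed

lemma Least_eq_below:
  fixes P Q :: "nat \<Rightarrow> bool"
  assumes "P w" "Q w" "\<forall>j\<le>w. P j \<longleftrightarrow> Q j"
  shows "(LEAST j. P j) = (LEAST j. Q j)"
proof -
  have a: "(LEAST j. P j) \<le> w" "(LEAST j. Q j) \<le> w" using assms by (auto intro: Least_le)
  have "P (LEAST j. P j)" "Q (LEAST j. Q j)" using assms by (auto intro: LeastI)
  then have "Q (LEAST j. P j)" "P (LEAST j. Q j)" using assms(3) a by auto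
  then show ?thesis by (metis Least_le le_antisym)
qed

lemma stop_from_le: "N \<ge> 1 \<Longrightarrow> stop_from N t 0 rs < N"
proof -
  assume "N \<ge> 1"
  have "stop_from N t 0 rs \<le> N - 1" unfolding stop_from_def by (rule Least_le) simp
  then show ?thesis using \<open>N \<ge> 1\<close> by simp
qed

lemma transfer_gen:
  assumes N: "N \<ge> 1"
    and eqv: "\<And>p. p \<in> perms N \<Longrightarrow> Pr p \<longleftrightarrow> win N (phi p) (stop_from N t 0 (phi p))"
  shows "(\<Sum>p\<in>{p \<in> perms N. Pr p}. th ^ lrm p) = F N th t []"
proof -
  have "(\<Sum>p\<in>{p \<in> perms N. Pr p}. th ^ lrm p) = (\<Sum>p\<in>perms N. if Pr p then th ^ lrm p else 0)"
    unfolding perms_def by (rule sum.inter_filter) simp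
  also have "\<dots> = (\<Sum>p\<in>perms N. (\<lambda>rs. wt th 0 rs *
      (if win N rs (stop_from N t 0 rs) then 1 else 0)) (phi p))"
    using eqv lrm_wt by (intro sum.cong) auto
  also have "\<dots> = (\<Sum>rs\<in>Comp N 0. wt th 0 rs * (if win N rs (stop_from N t 0 rs) then 1 else 0))"
    by (rule sum.reindex_bij_betw[OF phi_bij])
  also have "\<dots> = F N th t []" unfolding F_def by simp
  finally show ?thesis .
qed

lemma stop_index_eq:
  assumes N: "N \<ge> 1" and p: "p \<in> perms N"
    and agree: "\<And>i. 1 \<le> i \<Longrightarrow> i \<le> N \<Longrightarrow> s (rel_pattern (take i p)) = t (take i (phi p))"
  shows "stop_index N s p = Suc (stop_from N t 0 (phi p))"
proof -
  have "stop_index N s p = Suc (LEAST m. 1 \<le> Suc m \<and> (Suc m = N \<or> s (rel_pattern (take (Suc m) p))))"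
    unfolding stop_index_def by (rule Least_Suc[of _ N]) (use N in auto)
  also have "(LEAST m. 1 \<le> Suc m \<and> (Suc m = N \<or> s (rel_pattern (take (Suc m) p)))) =
      (LEAST j. 0 \<le> j \<and> (j = N - 1 \<or> t (take (Suc j) (phi p))))"
    using N agree by (intro Least_eq_below[of _ "N - 1"]) auto
  finally show ?thesis unfolding stop_from_def .
qed

lemma transfer_wins:
  assumes N: "N \<ge> 1"
    and agree: "\<And>p i. p \<in> perms N \<Longrightarrow> 1 \<le> i \<Longrightarrow> i \<le> N \<Longrightarrow>
        s (rel_pattern (take i p)) = t (take i (phi p))"
  shows "(\<Sum>p\<in>{p \<in> perms N. wins N s p}. th ^ lrm p) = F N th t []"
proof (rule transfer_gen[OF N])
  fix p assume p: "p \<in> perms N"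
  have "wins N s p \<longleftrightarrow> p ! (stop_from N t 0 (phi p)) = N"
    unfolding wins_def using stop_index_eq[where s=s and t=t, OF N p agree[OF p]] p by simp
  also have "\<dots> \<longleftrightarrow> win N (phi p) (stop_from N t 0 (phi p))"
    using win_iff[OF p stop_from_le[OF N]] by simp
  finally show "wins N s p \<longleftrightarrow> win N (phi p) (stop_from N t 0 (phi p))" .
qed



lemma last_take_phi: "j < length xs \<Longrightarrow> last (take (Suc j) (phi xs)) = rk xs j"
proof -
  assume j: "j < length xs"
  then have "take (Suc j) (phi xs) = take j (phi xs) @ [phi xs ! j]"
    by (simp add: take_Suc_conv_app_nth phi_def)
  then show ?thesis using phi_nth[OF j] by simp
qed

lemma posr_agree:
  assumes p: "p \<in> perms N" and i: "1 \<le> i" "i \<le> N"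
  shows "pos_strategy k (rel_pattern (take i p)) = posr k (take i (phi p))"
proof -
  have lp: "length p = N" "distinct p" using perms_facts[OF p] by auto
  obtain j where ij: "i = Suc j" using i by (cases i) auto
  have jN: "j < length p" using ij i lp by simp
  have len: "length (rel_pattern (take i p)) = i" using i lp by (simp add: rel_pattern_def)
  have ne: "rel_pattern (take i p) \<noteq> []" using len ij by auto
  have "last (rel_pattern (take i p)) = rel_pattern (take i p) ! j"
    using last_conv_nth[OF ne] len ij by simp
  also have "\<dots> = card {l. l < i \<and> p!l \<le> p!j}"
    using rel_pattern_nth[OF lp(2)] i lp ij by simp
  finally have lst: "last (rel_pattern (take i p)) = card {l. l < i \<and> p!l \<le> p!j}" .
  have sub: "{l. l < i \<and> p!l \<le> p!j} \<subseteq> {..<i}" by auto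
  have "card {l. l < i \<and> p!l \<le> p!j} = i \<longleftrightarrow> {l. l < i \<and> p!l \<le> p!j} = {..<i}"
  proof
    assume "card {l. l < i \<and> p!l \<le> p!j} = i"
    then show "{l. l < i \<and> p!l \<le> p!j} = {..<i}"
      by (metis card_lessThan card_subset_eq finite_lessThan sub)
  qed simp
  also have "\<dots> \<longleftrightarrow> (\<forall>l<j. p!l < p!j)"
  proof
    assume e: "{l. l < i \<and> p!l \<le> p!j} = {..<i}"
    show "\<forall>l<j. p!l < p!j"
    proof (intro allI impI)
      fix l assume l: "l < j"
      have "l \<in> {..<i}" using l ij by simp
      then have "l \<in> {l. l < i \<and> p!l \<le> p!j}" using e by blast
      then have "p!l \<le> p!j" by blast
      moreover have "p!l \<noteq> p!j" using lp l jN nth_eq_iff_index_eq[of p l j] by simp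
      ultimately show "p!l < p!j" by simp
    qed
  next
    assume a: "\<forall>l<j. p!l < p!j"
    show "{l. l < i \<and> p!l \<le> p!j} = {..<i}"
    proof (rule equalityI)
      show "{..<i} \<subseteq> {l. l < i \<and> p!l \<le> p!j}"
      proof
        fix x assume "x \<in> {..<i}"
        then have x: "x < Suc j" using ij by simp
        have "p!x \<le> p!j"
        proof (cases "x = j")
          case False
          then have "x < j" using x by simp
          then show ?thesis using a by (simp add: less_imp_le)
        qed simp
        then show "x \<in> {l. l < i \<and> p!l \<le> p!j}" using x ij by simp
      qed
    qed (rule sub)
  qed
  also have "\<dots> \<longleftrightarrow> is_lrm p j" using jN by (simp add: is_lrm_def)
  also have "\<dots> \<longleftrightarrow> rk p j = j" by (rule is_lrm_rk[OF jN])
  finally have "last (rel_pattern (take i p)) = i \<longleftrightarrow> rk p j = j" using lst by simp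
  moreover have "last (take i (phi p)) = rk p j" using last_take_phi[OF jN] ij by simp
  moreover have "length (take i (phi p)) = i" using lp i by (simp add: phi_def)
  moreover have "i - 1 = j" using ij by simp
  ultimately show ?thesis unfolding pos_strategy_def posr_def using len by metis
qed

lemma W_eq:
  assumes N: "N \<ge> 1" and k: "k \<le> N - 1"
  shows "W th N k = F N th (posr k) []"
  unfolding W_def
proof (rule transfer_gen[OF N])
  fix p assume p: "p \<in> perms N"
  have lp: "length p = N" "distinct p" using perms_facts[OF p] by auto
  define P where "P j \<longleftrightarrow> j = N - 1 \<or> (k \<le> j \<and> is_lrm p j)" for j
  define sg where "sg = (LEAST j. P j)"
  have Pw: "P (N - 1)" unfolding P_def by simp
  have sgN: "sg < N" unfolding sg_def using Least_le[of P, OF Pw] N by simp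
  have stp: "stop_from N (posr k) 0 (phi p) = sg"
    unfolding stop_from_def sg_def
  proof (rule Least_eq_below[of _ "N - 1"])
    show "0 \<le> N - 1 \<and> (N - 1 = N - 1 \<or> posr k (take (Suc (N - 1)) (phi p)))" by simp
    show "P (N - 1)" by (rule Pw)
    show "\<forall>j\<le>N - 1. (0 \<le> j \<and> (j = N - 1 \<or> posr k (take (Suc j) (phi p)))) = P j"
    proof (intro allI impI)
      fix j assume "j \<le> N - 1"
      then have jN: "j < length p" using N lp by simp
      have "posr k (take (Suc j) (phi p)) \<longleftrightarrow> k \<le> j \<and> is_lrm p j"
        unfolding posr_def using last_take_phi[OF jN] is_lrm_rk[OF jN] jN
        by (simp add: phi_def less_Suc_eq_le)
      then show "(0 \<le> j \<and> (j = N - 1 \<or> posr k (take (Suc j) (phi p)))) = P j"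
        unfolding P_def by simp
    qed
  qed
  have "k_winnable N k p \<longleftrightarrow> p!sg = N"
  proof
    assume "k_winnable N k p"
    then obtain j where j: "k \<le> j" "j < N" "is_lrm p j" "p!j = N"
        "\<forall>i. k \<le> i \<and> i < j \<longrightarrow> \<not> is_lrm p i"
      unfolding k_winnable_def by blast
    have "sg = j" unfolding sg_def
    proof (rule Least_equality)
      show "P j" unfolding P_def using j by simp
      fix y assume "P y"
      then show "j \<le> y" unfolding P_def using j by (metis not_le le_diff_conv2 N Suc_le_eq add.commute plus_1_eq_Suc)
    qed
    then show "p!sg = N" using j by simp
  next
    assume ps: "p!sg = N"
    have le: "\<And>l. l < N \<Longrightarrow> p!l \<le> N" using perm_nth[OF p] by auto
    have lrm: "is_lrm p sg"
      unfolding is_lrm_def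
    proof (intro conjI allI impI)
      show "sg < length p" using sgN lp by simp
      fix i assume i: "i < sg"
      have "p!i \<noteq> p!sg" using lp i sgN nth_eq_iff_index_eq[of p i sg] by simp
      then show "p!i < p!sg" using le[of i] i sgN ps by simp
    qed
    have Psg: "P sg" unfolding sg_def by (rule LeastI[of P, OF Pw])
    have ksg: "k \<le> sg" using Psg k unfolding P_def by auto
    have "\<forall>i. k \<le> i \<and> i < sg \<longrightarrow> \<not> is_lrm p i"
    proof (intro allI impI)
      fix i assume i: "k \<le> i \<and> i < sg"
      then have "\<not> P i" unfolding sg_def by (intro not_less_Least) auto
      then show "\<not> is_lrm p i" using i unfolding P_def by simp
    qed
    then show "k_winnable N k p" unfolding k_winnable_def using ksg sgN lrm ps by blast
  qed
  also have "\<dots> \<longleftrightarrow> win N (phi p) (stop_from N (posr k) 0 (phi p))"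
    using win_iff[OF p sgN] stp by simp
  finally show "k_winnable N k p \<longleftrightarrow> win N (phi p) (stop_from N (posr k) 0 (phi p))" .
qed

definition tstrat :: "nat \<Rightarrow> strategy \<Rightarrow> nat list \<Rightarrow> bool" where
  "tstrat N s h = s (rel_pattern (take (length h) (SOME q. q \<in> perms N \<and> take (length h) (phi q) = h)))"

lemma tstrat_agree:
  assumes p: "p \<in> perms N" and i: "i \<le> N"
  shows "s (rel_pattern (take i p)) = tstrat N s (take i (phi p))"
proof -
  have lp: "length p = N" "length (phi p) = N" using perms_facts[OF p] by (auto simp: phi_def)
  define h where "h = take i (phi p)"
  have lh: "length h = i" using lp i unfolding h_def by simp
  have ex: "\<exists>q. q \<in> perms N \<and> take i (phi q) = h" using p unfolding h_def by blast
  define q where "q = (SOME q. q \<in> perms N \<and> take i (phi q) = h)"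
  have q: "q \<in> perms N" "take i (phi q) = h" unfolding q_def using someI_ex[OF ex] by auto
  have lq: "length q = N" using perms_facts[OF q(1)] by simp
  have "\<forall>j<i. rk q j = rk p j"
  proof (intro allI impI)
    fix j assume j: "j < i"
    have "take i (phi q) ! j = take i (phi p) ! j" using q(2) unfolding h_def by simp
    then show "rk q j = rk p j" using j i lp lq by (simp add: phi_nth)
  qed
  then have "rel_pattern (take i q) = rel_pattern (take i p)" by (rule rel_pattern_eq[OF q(1) p i])
  then show ?thesis unfolding tstrat_def lh q_def[symmetric] h_def[symmetric] by simp
qed

lemma Z_pos:
  fixes th :: real
  assumes "th > 0"
  shows "(\<Sum>p\<in>perms N. th ^ lrm p) > 0"
proof -
  have "[1..<N+1] \<in> perms N" unfolding perms_def by (rule permutations_of_setI) auto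
  then have "perms N \<noteq> {}" by auto
  show ?thesis
  proof (rule ordered_comm_monoid_add_class.sum_pos)
    show "finite (perms N)" by (simp add: perms_def)
    show "perms N \<noteq> {}" by fact
    fix p show "0 < th ^ lrm p" using assms by simp
  qed
qed

theorem corollary4p6:
  fixes N :: nat
  assumes "N \<ge> 2"
  shows "(\<forall>\<theta>::real. \<theta> > 0 \<longrightarrow>
            (\<forall>k. k \<le> N - 1 \<longrightarrow> W \<theta> N (kappa N \<theta>) \<ge> W \<theta> N k) \<and>
            (\<forall>s::strategy. win_prob \<theta> N (pos_strategy (kappa N \<theta>)) \<ge> win_prob \<theta> N s))
         \<and> (\<forall>\<theta>1 \<theta>2::real. 0 < \<theta>1 \<longrightarrow> \<theta>1 \<le> \<theta>2 \<longrightarrow> kappa N \<theta>1 \<le> kappa N \<theta>2)"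
proof (rule conjI)
  show "\<forall>\<theta>1 \<theta>2::real. 0 < \<theta>1 \<longrightarrow> \<theta>1 \<le> \<theta>2 \<longrightarrow> kappa N \<theta>1 \<le> kappa N \<theta>2"
    using kappa_mono[OF assms] by blast
next
 show "\<forall>\<theta>::real. \<theta> > 0 \<longrightarrow>
            (\<forall>k. k \<le> N - 1 \<longrightarrow> W \<theta> N (kappa N \<theta>) \<ge> W \<theta> N k) \<and>
            (\<forall>s::strategy. win_prob \<theta> N (pos_strategy (kappa N \<theta>)) \<ge> win_prob \<theta> N s)"
 proof (intro allI impI)
  fix th :: real assume th: "th > 0"
  have N1: "N \<ge> 1" using assms by simp
  define ka where "ka = kappa N th"
  have kc: "ka \<le> N - 1" "\<forall>i. i \<le> N - 2 \<longrightarrow> (i < ka \<longleftrightarrow> 1 / H N i < th)"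
    using kappa_char[OF assms th] unfolding ka_def by auto
  have hi: "th * H N i \<le> 1" if "ka \<le> i" "Suc i < N" for i
  proof -
    have "i \<le> N - 2" "i + 2 \<le> N" using that by auto
    then have "\<not> 1 / H N i < th" "H N i > 0" using kc that H_pos by auto
    then have "th \<le> 1 / H N i" by simp
    then show ?thesis using \<open>H N i > 0\<close> by (simp add: le_divide_eq)
  qed
  have lo: "th * H N i > 1" if "i < ka" for i
  proof -
    have "i \<le> N - 2" "i + 2 \<le> N" using that kc assms by auto
    then have "1 / H N i < th" "H N i > 0" using kc that H_pos by auto
    then show ?thesis by (simp add: divide_less_eq)
  qed
  have kaN: "ka < N" using kc assms by simp
  have BD: "B N th 0 = D N th ka 0" using B_eq_D[OF th kaN hi lo] by simp
  have FD: "F N th (posr ka) [] = D N th ka 0" using F_posr[OF kaN, of "[]" 0] N1 by simp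
  have bound: "F N th t [] \<le> B N th 0" for t using F_le_B[OF th, of "[]" 0] N1 by simp
  have Wka: "W th N ka = B N th 0" using W_eq[OF N1 kc(1)] FD BD by simp
  show "(\<forall>k. k \<le> N - 1 \<longrightarrow> W th N (kappa N th) \<ge> W th N k) \<and>
     (\<forall>s::strategy. win_prob th N (pos_strategy (kappa N th)) \<ge> win_prob th N s)"
  proof (rule conjI)
  show "\<forall>k. k \<le> N - 1 \<longrightarrow> W th N (kappa N th) \<ge> W th N k"
  proof (intro allI impI)
    fix k assume "k \<le> N - 1"
    then have "W th N k = F N th (posr k) []" using W_eq[OF N1] by simp
    then show "W th N (kappa N th) \<ge> W th N k" using bound Wka ka_def by simp
  qed
  show "\<forall>s::strategy. win_prob th N (pos_strategy (kappa N th)) \<ge> win_prob th N s"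
  proof
    fix s :: strategy
    have ws: "(\<Sum>p\<in>{p \<in> perms N. wins N s p}. th ^ lrm p) = F N th (tstrat N s) []"
      by (rule transfer_wins[OF N1]) (rule tstrat_agree; simp)
    have wk: "(\<Sum>p\<in>{p \<in> perms N. wins N (pos_strategy ka) p}. th ^ lrm p) = F N th (posr ka) []"
      by (rule transfer_wins[OF N1]) (rule posr_agree; simp)
    have "(\<Sum>p\<in>{p \<in> perms N. wins N s p}. th ^ lrm p) \<le>
        (\<Sum>p\<in>{p \<in> perms N. wins N (pos_strategy ka) p}. th ^ lrm p)"
      using ws wk bound FD BD by simp
    then show "win_prob th N (pos_strategy (kappa N th)) \<ge> win_prob th N s"
      unfolding win_prob_def ka_def[symmetric]
      using Z_pos[OF th, of N] by (intro divide_right_mono) auto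
  qed
  qed
 qed
qed


end
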